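(* Let $M$ be an adequate monoid and $\chi:\Sigma\to M$ a function, and let $\rho:UT^1(\Sigma)\to M$ be the map defined below. Then $\rho$ is a morphism of $(2,1,1,0)$-algebras from $UT^1(\Sigma)$ (with unpruned multiplication $\times$, unpruned $(+)$, unpruned $( * )$ and the trivial tree as identity) to $M$; that is, $\rho(X\times Y)=\rho(X)\rho(Y)$, $\rho(X^{(+)})=\rho(X)^+$, $\rho(X^{( * )})=\rho(X)^*$ for all $X,Y$, and $\rho$ maps the trivial tree to $1$.
   Context: Adequate monoid: a monoid $M$ whose idempotents commute and in which every $\mathcal{L}^*$-class and every $\mathcal{R}^*$-class contains an idempotent, where $a\,\mathcal{L}^*\,b$ iff ($ax=ay\Leftrightarrow bx=by$ for all $x,y\in M$) and $a\,\mathcal{R}^*\,b$ iff ($xa=ya\Leftrightarrow xb=yb$ for all $x,y\in M$); $x^+$ and $x^*$ denote the unique idempotents $\mathcal{R}^*$- and $\mathcal{L}^*$-related to $x$. It is regarded as a $(2,1,1,0)$-algebra. Trees: a $\Sigma$-tree is a finite directed graph whose underlying undirected graph is a tree, each edge $e$ having initial vertex $\alpha(e)$, terminal vertex $\omega(e)$ and label $\lambda(e)\in\Sigma$, with distinguished start and end vertices such that there is a (possibly empty) directed path (the trunk) from start to end vertex. Trivial tree: one vertex; idempotent tree: start vertex equals end vertex. $UT^1(\Sigma)$ is the set of isomorphism types (label-, start- and end-preserving graph isomorphisms) of $\Sigma$-trees. Unpruned operations: $X\times Y$ identifies the end vertex of (a copy of) $X$ with the start vertex of (a disjoint copy of) $Y$,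 start vertex that of $X$, end vertex that of $Y$; $X^{(+)}$ is $X$ with end vertex moved to the start vertex; $X^{( * )}$ is $X$ with start vertex moved to the end vertex. The map $\tau$ from idempotent trees to idempotents of $M$ is defined recursively on the number of edges: if $X$ has no edges, $\tau(X)=1$. Otherwise let $v$ be its start (= end) vertex; for an edge $e$ with $\alpha(e)=v$ let $X_e$ be the connected component of $X$ with edge $e$ removed containing $\omega(e)$, viewed as an idempotent tree with start and end vertex $\omega(e)$; for an edge $e$ with $\omega(e)=v$ let $X_e$ be the component of $X$ with $e$ removed containing $\alpha(e)$, viewed as an idempotent tree at $\alpha(e)$. Then $\tau(X)=\prod_{e:\alpha(e)=v}[\chi(\lambda(e))\tau(X_e)]^+\cdot\prod_{e:\omega(e)=v}[\tau(X_e)\chi(\lambda(e))]^*$ (a product of commuting idempotents, independent of order). For an arbitrary tree $X$ with trunk vertices $v_0,\dots,v_n$ in order and $a_i$ the label of the trunk edge from $v_{i-1}$ to $v_i$, let $X_i$ be the connected component containing $v_i$ of $X$ with all trunk edges removed, viewed as an idempotent tree at $v_i$, and set $\rho(X)=\tau(X_0)\chi(a_1)\tau(X_1)\chi(a_2)\cdots\chi(a_n)\tau(X_n)$. *)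

theory Defs
  imports Main
begin

definition Lstar_rel :: "'m::monoid_mult \<Rightarrow> 'm \<Rightarrow> bool" where
  "Lstar_rel a b \<longleftrightarrow> (\<forall>x y. a * x = a * y \<longleftrightarrow> b * x = b * y)"

definition Rstar_rel :: "'m::monoid_mult \<Rightarrow> 'm \<Rightarrow> bool" where
  "Rstar_rel a b \<longleftrightarrow> (\<forall>x y. x * a = y * a \<longleftrightarrow> x * b = y * b)"

definition idem :: "'m::monoid_mult \<Rightarrow> bool" where
  "idem e \<longleftrightarrow> e * e = e"

definition adequate :: "'m::monoid_mult itself \<Rightarrow> bool" where
  "adequate _ \<longleftrightarrow>
     (\<forall>e f :: 'm. idem e \<and> idem f \<longrightarrow> e * f = f * e) \<and>
     (\<forall>a :: 'm. \<exists>e. idem e \<and> Lstar_rel a e) \<and>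
     (\<forall>a :: 'm. \<exists>e. idem e \<and> Rstar_rel a e)"

definition Mplus :: "'m::monoid_mult \<Rightarrow> 'm" where
  "Mplus x = (THE e. idem e \<and> Rstar_rel x e)"

definition Mstar :: "'m::monoid_mult \<Rightarrow> 'm" where
  "Mstar x = (THE e. idem e \<and> Lstar_rel x e)"

text \<open>An idempotent Sigma-tree, rooted at its start (= end) vertex v: the list of edges
  incident to v, each given as (direction, label, component on the other side viewed as an
  idempotent tree rooted at the other endpoint).  Direction True means alpha(e) = v (edge
  leaves the root), False means omega(e) = v (edge enters the root).  Isomorphism types
  correspond to these terms up to reordering of children lists (recursively).\<close>
datatype 's itree = INode "(bool \<times> 's \<times> 's itree) list"

text \<open>A general Sigma-tree, given by its trunk decomposition: (X_0, [(a_1,X_1),...,(a_n,X_n)])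
  where a_i labels the trunk edge v_{i-1} -> v_i and X_i is the idempotent tree hanging at
  the trunk vertex v_i.\<close>
type_synonym 's tree = "'s itree \<times> ('s \<times> 's itree) list"

definition trivial_tree :: "'s tree" where
  "trivial_tree = (INode [], [])"

fun imerge :: "'s itree \<Rightarrow> 's itree \<Rightarrow> 's itree" where
  "imerge (INode cs) (INode ds) = INode (cs @ ds)"

fun iadd :: "'s itree \<Rightarrow> bool \<times> 's \<times> 's itree \<Rightarrow> 's itree" where
  "iadd (INode cs) e = INode (cs @ [e])"

text \<open>Unpruned product: glue the end vertex of X to the start vertex of Y.\<close>
fun tmul :: "'s tree \<Rightarrow> 's tree \<Rightarrow> 's tree" where
  "tmul (X0, []) (Y0, qs) = (imerge X0 Y0, qs)"
| "tmul (X0, (a, X1) # ps) Y = (case tmul (X1, ps) Y of (Z, rs) \<Rightarrow> (X0, (a, Z) # rs))"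

text \<open>Idempotent tree obtained by rooting the whole tree at its start vertex.\<close>
fun plus_root :: "'s itree \<Rightarrow> ('s \<times> 's itree) list \<Rightarrow> 's itree" where
  "plus_root X0 [] = X0"
| "plus_root X0 ((a, X1) # ps) = iadd X0 (True, a, plus_root X1 ps)"

text \<open>Idempotent tree obtained by rooting the whole tree at its end vertex
  (accumulating the part of the trunk already traversed).\<close>
fun star_acc :: "'s itree \<Rightarrow> ('s \<times> 's itree) list \<Rightarrow> 's itree" where
  "star_acc T [] = T"
| "star_acc T ((a, X) # ps) = star_acc (iadd X (False, a, T)) ps"

definition tplus :: "'s tree \<Rightarrow> 's tree" where
  "tplus X = (plus_root (fst X) (snd X), [])"

definition tstar :: "'s tree \<Rightarrow> 's tree" where
  "tstar X = (star_acc (fst X) (snd X), [])"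

fun tau :: "('s \<Rightarrow> 'm::monoid_mult) \<Rightarrow> 's itree \<Rightarrow> 'm" where
  "tau \<chi> (INode cs) =
     prod_list (map (\<lambda>e. if fst e then Mplus (\<chi> (fst (snd e)) * tau \<chi> (snd (snd e)))
                          else Mstar (tau \<chi> (snd (snd e)) * \<chi> (fst (snd e)))) cs)"

definition rho :: "('s \<Rightarrow> 'm::monoid_mult) \<Rightarrow> 's tree \<Rightarrow> 'm" where
  "rho \<chi> X = tau \<chi> (fst X) * prod_list (map (\<lambda>p. \<chi> (fst p) * tau \<chi> (snd p)) (snd X))"

end

theory Submission
  imports Defs
begin

context
  fixes dummy :: "'m::monoid_mult itself"
  assumes ad: "adequate TYPE('m)"
begin

lemma comm_idem: "idem (e::'m) \<Longrightarrow> idem f \<Longrightarrow> e*f = f*e"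
  using ad unfolding adequate_def by blast

lemma R_ex: "\<exists>e::'m. idem e \<and> Rstar_rel a e"
  using ad unfolding adequate_def by blast

lemma L_ex: "\<exists>e::'m. idem e \<and> Lstar_rel a e"
  using ad unfolding adequate_def by blast

lemma R_uniq: "idem (e::'m) \<Longrightarrow> idem f \<Longrightarrow> Rstar_rel e f \<Longrightarrow> e = f"
proof -
  assume e: "idem e" and f: "idem f" and r: "Rstar_rel e f"
  have "e*e = 1*e" using e by (simp add: idem_def)
  hence 1: "e*f = f" using r unfolding Rstar_rel_def by (metis mult_1_left)
  have "f*f = 1*f" using f by (simp add: idem_def)
  hence 2: "f*e = e" using r unfolding Rstar_rel_def by (metis mult_1_left)
  show "e = f" using 1 2 comm_idem[OF e f] by simp
qed

lemma L_uniq: "idem (e::'m) \<Longrightarrow> idem f \<Longrightarrow> Lstar_rel e f \<Longrightarrow> e = f"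
proof -
  assume e: "idem e" and f: "idem f" and r: "Lstar_rel e f"
  have "e*e = e*1" using e by (simp add: idem_def)
  hence 1: "f*e = f" using r unfolding Lstar_rel_def by (metis mult_1_right)
  have "f*f = f*1" using f by (simp add: idem_def)
  hence 2: "e*f = e" using r unfolding Lstar_rel_def by (metis mult_1_right)
  show "e = f" using 1 2 comm_idem[OF e f] by simp
qed

lemma R_sym: "Rstar_rel a b \<Longrightarrow> Rstar_rel b a"
  unfolding Rstar_rel_def by blast
lemma R_trans: "Rstar_rel a b \<Longrightarrow> Rstar_rel b c \<Longrightarrow> Rstar_rel a c"
  unfolding Rstar_rel_def by blast
lemma L_sym: "Lstar_rel a b \<Longrightarrow> Lstar_rel b a"
  unfolding Lstar_rel_def by blast
lemma L_trans: "Lstar_rel a b \<Longrightarrow> Lstar_rel b c \<Longrightarrow> Lstar_rel a c"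
  unfolding Lstar_rel_def by blast
lemma R_cong: "Rstar_rel a b \<Longrightarrow> Rstar_rel (c*a) (c*b)"
  unfolding Rstar_rel_def
proof (intro allI)
  fix x y assume h: "\<forall>x y. (x * a = y * a) = (x * b = y * b)"
  have "(x * c * a = y * c * a) = (x * c * b = y * c * b)" using h by blast
  then show "(x * (c * a) = y * (c * a)) = (x * (c * b) = y * (c * b))" by (simp add: mult.assoc)
qed
lemma L_cong: "Lstar_rel a b \<Longrightarrow> Lstar_rel (a*c) (b*c)"
  unfolding Lstar_rel_def
proof (intro allI)
  fix x y assume h: "\<forall>x y. (a * x = a * y) = (b * x = b * y)"
  have "(a * (c * x) = a * (c * y)) = (b * (c * x) = b * (c * y))" using h by blast
  then show "(a * c * x = a * c * y) = (b * c * x = b * c * y)" by (simp add: mult.assoc)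
qed

lemma Mplus_char: "idem e \<Longrightarrow> Rstar_rel (a::'m) e \<Longrightarrow> Mplus a = e"
proof -
  assume e: "idem e" and r: "Rstar_rel a e"
  show ?thesis unfolding Mplus_def
  proof (rule the_equality)
    show "idem e \<and> Rstar_rel a e" using e r by simp
  next
    fix f assume "idem f \<and> Rstar_rel a f"
    then have "idem f" "Rstar_rel e f" using r R_sym R_trans by blast+
    then show "f = e" using R_uniq[OF e] by metis
  qed
qed

lemma Mstar_char: "idem e \<Longrightarrow> Lstar_rel (a::'m) e \<Longrightarrow> Mstar a = e"
proof -
  assume e: "idem e" and r: "Lstar_rel a e"
  show ?thesis unfolding Mstar_def
  proof (rule the_equality)
    show "idem e \<and> Lstar_rel a e" using e r by simp
  next
    fix f assume "idem f \<and> Lstar_rel a f"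
    then have "idem f" "Lstar_rel e f" using r L_sym L_trans by blast+
    then show "f = e" using L_uniq[OF e] by metis
  qed
qed

lemma Mplus_prop: "idem (Mplus (a::'m)) \<and> Rstar_rel a (Mplus a)"
proof -
  obtain e where "idem e" "Rstar_rel a e" using R_ex[of a] by blast
  then show ?thesis using Mplus_char by simp
qed

lemma Mstar_prop: "idem (Mstar (a::'m)) \<and> Lstar_rel a (Mstar a)"
proof -
  obtain e where "idem e" "Lstar_rel a e" using L_ex[of a] by blast
  then show ?thesis using Mstar_char by simp
qed

lemma Mplus_idem: "idem (e::'m) \<Longrightarrow> Mplus e = e"
  by (rule Mplus_char) (auto simp: Rstar_rel_def)

lemma Mstar_idem: "idem (e::'m) \<Longrightarrow> Mstar e = e"
  by (rule Mstar_char) (auto simp: Lstar_rel_def)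

lemma Mplus_A: "Mplus ((a::'m) * Mplus b) = Mplus (a*b)"
proof -
  have "Rstar_rel (a*b) (a * Mplus b)" using R_cong Mplus_prop by blast
  then show ?thesis using Mplus_prop Mplus_char R_trans by metis
qed

lemma Mstar_A: "Mstar (Mstar (a::'m) * b) = Mstar (a*b)"
proof -
  have "Lstar_rel (a*b) (Mstar a * b)" using L_cong Mstar_prop by blast
  then show ?thesis using Mstar_prop Mstar_char L_trans by metis
qed

lemma idem_mult: "idem (e::'m) \<Longrightarrow> idem f \<Longrightarrow> idem (e*f)"
  unfolding idem_def
  by (metis comm_idem idem_def mult.assoc)

lemma Mplus_B: "idem (e::'m) \<Longrightarrow> Mplus (e * a) = e * Mplus a"
  by (metis Mplus_A Mplus_idem Mplus_prop idem_mult)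

lemma Mstar_B: "idem (e::'m) \<Longrightarrow> Mstar (a * e) = Mstar a * e"
  by (metis Mstar_A Mstar_idem Mstar_prop idem_mult)

lemma idem_prod_list: "(\<forall>f\<in>set xs. idem (f::'m)) \<Longrightarrow> idem (prod_list xs)"
  by (induction xs) (auto simp: idem_def[of 1] intro: idem_mult)

lemma tau_idem: "idem (tau (\<chi>::'s \<Rightarrow> 'm) X)"
  by (cases X) (auto intro!: idem_prod_list simp: Mplus_prop Mstar_prop)

end

lemma tau_imerge: "tau \<chi> (imerge X Y) = tau \<chi> X * tau \<chi> Y"
  by (cases X; cases Y) simp

lemma tau_iadd: "tau \<chi> (iadd X e) = tau \<chi> X *
   (if fst e then Mplus (\<chi> (fst (snd e)) * tau \<chi> (snd (snd e)))
    else Mstar (tau \<chi> (snd (snd e)) * \<chi> (fst (snd e))))"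
  by (cases X) simp

lemma rho_tmul: "rho \<chi> (tmul (X0, ps) Y) = rho \<chi> (X0, ps) * rho \<chi> Y"
proof (induction ps arbitrary: X0)
  case Nil
  then show ?case by (cases Y) (simp add: rho_def tau_imerge mult.assoc)
next
  case (Cons p ps)
  obtain a X1 where p: "p = (a, X1)" by (cases p)
  obtain Z rs where z: "tmul (X1, ps) Y = (Z, rs)" by (cases "tmul (X1, ps) Y")
  have "rho \<chi> (Z, rs) = rho \<chi> (X1, ps) * rho \<chi> Y" using Cons.IH[of X1] z by simp
  then show ?case using z p by (simp add: rho_def mult.assoc)
qed

theorem proposition5p5:
  fixes \<chi> :: "'s \<Rightarrow> 'm::monoid_mult"
  assumes "adequate TYPE('m)"
  shows "(\<forall>X Y :: 's tree. rho \<chi> (tmul X Y) = rho \<chi> X * rho \<chi> Y)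
       \<and> (\<forall>X :: 's tree. rho \<chi> (tplus X) = Mplus (rho \<chi> X))
       \<and> (\<forall>X :: 's tree. rho \<chi> (tstar X) = Mstar (rho \<chi> X))
       \<and> rho \<chi> (trivial_tree :: 's tree) = 1"
proof (intro conjI allI)
  fix X Y :: "'s tree"
  show "rho \<chi> (tmul X Y) = rho \<chi> X * rho \<chi> Y"
    using rho_tmul by (metis prod.collapse)
next
  have P: "tau \<chi> (plus_root X0 ps) = Mplus (rho \<chi> (X0, ps))" for X0 ps
  proof (induction ps arbitrary: X0)
    case Nil
    then show ?case by (simp add: rho_def Mplus_idem[OF assms tau_idem[OF assms]])
  next
    case (Cons p ps)
    obtain a X1 where p: "p = (a, X1)" by (cases p)
    have "tau \<chi> X0 * Mplus (\<chi> a * Mplus (rho \<chi> (X1, ps)))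
        = Mplus (tau \<chi> X0 * (\<chi> a * rho \<chi> (X1, ps)))"
    proof -
      have "Mplus (\<chi> a * Mplus (rho \<chi> (X1, ps))) = Mplus (\<chi> a * rho \<chi> (X1, ps))"
        by (rule Mplus_A[OF assms])
      moreover have "Mplus (tau \<chi> X0 * (\<chi> a * rho \<chi> (X1, ps)))
         = tau \<chi> X0 * Mplus (\<chi> a * rho \<chi> (X1, ps))"
        by (rule Mplus_B[OF assms tau_idem[OF assms]])
      ultimately show ?thesis by simp
    qed
    then show ?case using Cons p by (simp add: tau_iadd rho_def mult.assoc)
  qed
  fix X :: "'s tree"
  show "rho \<chi> (tplus X) = Mplus (rho \<chi> X)"
    using P[of "fst X" "snd X"] by (simp add: tplus_def rho_def)
next
  have S: "tau \<chi> (star_acc T ps) = Mstar (tau \<chi> T * prod_list (map (\<lambda>p. \<chi> (fst p) * tau \<chi> (snd p)) ps))" for T ps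
  proof (induction ps arbitrary: T)
    case Nil
    then show ?case by (simp add: Mstar_idem[OF assms tau_idem[OF assms]])
  next
    case (Cons p ps)
    obtain a X where p: "p = (a, X)" by (cases p)
    let ?r = "prod_list (map (\<lambda>p. \<chi> (fst p) * tau \<chi> (snd p)) ps)"
    have c: "tau \<chi> X * Mstar (tau \<chi> T * \<chi> a) = Mstar (tau \<chi> T * \<chi> a) * tau \<chi> X"
      using comm_idem[OF assms tau_idem[OF assms] Mstar_prop[OF assms, THEN conjunct1]] by blast
    have "Mstar (tau \<chi> X * Mstar (tau \<chi> T * \<chi> a) * ?r)
        = Mstar (tau \<chi> T * (\<chi> a * tau \<chi> X * ?r))"
    proof -
      have "Mstar (tau \<chi> T * (\<chi> a * tau \<chi> X * ?r)) = Mstar ((tau \<chi> T * \<chi> a * tau \<chi> X) * ?r)"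
        by (simp add: mult.assoc)
      also have "\<dots> = Mstar (Mstar (tau \<chi> T * \<chi> a * tau \<chi> X) * ?r)"
        by (rule Mstar_A[OF assms, symmetric])
      also have "Mstar (tau \<chi> T * \<chi> a * tau \<chi> X) = Mstar (tau \<chi> T * \<chi> a) * tau \<chi> X"
        by (rule Mstar_B[OF assms tau_idem[OF assms]])
      finally show ?thesis using c by simp
    qed
    then show ?case using Cons p by (simp add: tau_iadd mult.assoc)
  qed
  fix X :: "'s tree"
  show "rho \<chi> (tstar X) = Mstar (rho \<chi> X)"
    using S[of "fst X" "snd X"] by (simp add: tstar_def rho_def)
next
  show "rho \<chi> (trivial_tree :: 's tree) = 1" by (simp add: rho_def trivial_tree_def)
qed

end
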